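(* Let $P$ be any one-sided convex point set with $n\ge 2$ points. Then there exists a planar increasing-chord geometric graph with vertex set $P$ having exactly $2n-3$ edges.
   Context: A convex point set is a finite point set in the plane in which no point is a convex combination of the others; $\mathcal H_P$ denotes the convex hull of $P$. Let $\vec d$ be a directed straight line not orthogonal to any line through two points of $P$; ordering the points of $P$ by their orthogonal projections on $\vec d$, the first and last are the minimum and maximum points of $P$ with respect to $\vec d$. $P$ is one-sided with respect to $\vec d$ if its minimum and maximum points with respect to $\vec d$ are consecutive along the boundary of $\mathcal H_P$; $P$ is a one-sided convex point set if it is convex and one-sided with respect to some such directed line. A geometric graph consists of a point set and straight-line segments (edges) between its points; it is planar if no two edges cross. A geometric path $(v_1,\dots,v_k)$ is self-approaching from $v_1$ to $v_k$ if for every three distinct points $a,b,c$ appearing in this order along the path (possibly interior to edges) $|\overline{bc}|<|\overline{ac}|$, where $|\cdot|$ is Euclidean length. A geometric graph is increasing-chord if for every pair of vertices $u,v$ it contains a path between them that is self-approaching both from $u$ to $v$ and from $v$ to $u$. *)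

theory Defs
  imports "HOL-Analysis.Analysis"
begin

type_synonym pt = "real^2"

definition convex_point_set :: "pt set \<Rightarrow> bool" where
  "convex_point_set P \<longleftrightarrow> finite P \<and> (\<forall>p\<in>P. p \<notin> convex hull (P - {p}))"

text \<open>A directed line with direction d (only the direction matters for projections),
  not orthogonal to any line through two points of P.\<close>
definition generic_direction :: "pt set \<Rightarrow> pt \<Rightarrow> bool" where
  "generic_direction P d \<longleftrightarrow> d \<noteq> 0 \<and> (\<forall>p\<in>P. \<forall>q\<in>P. p \<noteq> q \<longrightarrow> (p - q) \<bullet> d \<noteq> 0)"

text \<open>Minimum point a and maximum point b w.r.t. d are consecutive along the
  boundary of the convex hull: the segment between them lies on the boundary.\<close>
definition one_sided_wrt :: "pt set \<Rightarrow> pt \<Rightarrow> bool" where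
  "one_sided_wrt P d \<longleftrightarrow>
     (\<exists>a\<in>P. \<exists>b\<in>P. (\<forall>p\<in>P. a \<bullet> d \<le> p \<bullet> d) \<and> (\<forall>p\<in>P. p \<bullet> d \<le> b \<bullet> d) \<and>
        closed_segment a b \<subseteq> frontier (convex hull P))"

definition one_sided_convex :: "pt set \<Rightarrow> bool" where
  "one_sided_convex P \<longleftrightarrow> convex_point_set P \<and>
     (\<exists>d. generic_direction P d \<and> one_sided_wrt P d)"

definition geometric_graph :: "pt set \<Rightarrow> pt set set \<Rightarrow> bool" where
  "geometric_graph P E \<longleftrightarrow> (\<forall>e\<in>E. e \<subseteq> P \<and> card e = 2)"

definition edge_seg :: "pt set \<Rightarrow> pt set" where
  "edge_seg e = (\<Union>a\<in>e. \<Union>b\<in>e. closed_segment a b)"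

definition planar_gg :: "pt set set \<Rightarrow> bool" where
  "planar_gg E \<longleftrightarrow> (\<forall>e1\<in>E. \<forall>e2\<in>E. e1 \<noteq> e2 \<longrightarrow> edge_seg e1 \<inter> edge_seg e2 \<subseteq> e1 \<inter> e2)"

text \<open>The polygonal curve of a vertex list, parametrized over [0, length vs - 1].\<close>
definition path_point :: "pt list \<Rightarrow> real \<Rightarrow> pt" where
  "path_point vs s = (let i = nat \<lfloor>s\<rfloor>; t = s - of_int \<lfloor>s\<rfloor> in
      if i + 1 < length vs then (1 - t) *\<^sub>R vs ! i + t *\<^sub>R vs ! (i + 1) else last vs)"

definition self_approaching :: "pt list \<Rightarrow> bool" where
  "self_approaching vs \<longleftrightarrow>
     (\<forall>s1 s2 s3. 0 \<le> s1 \<and> s1 < s2 \<and> s2 < s3 \<and> s3 \<le> real (length vs - 1) \<longrightarrow>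
        (let a = path_point vs s1; b = path_point vs s2; c = path_point vs s3 in
           a \<noteq> b \<and> b \<noteq> c \<and> a \<noteq> c \<longrightarrow> dist b c < dist a c))"

definition graph_path :: "pt set set \<Rightarrow> pt list \<Rightarrow> bool" where
  "graph_path E vs \<longleftrightarrow> vs \<noteq> [] \<and> distinct vs \<and>
     (\<forall>i. i + 1 < length vs \<longrightarrow> {vs ! i, vs ! (i + 1)} \<in> E)"

definition increasing_chord :: "pt set \<Rightarrow> pt set set \<Rightarrow> bool" where
  "increasing_chord P E \<longleftrightarrow>
     (\<forall>u\<in>P. \<forall>v\<in>P. \<exists>vs. graph_path E vs \<and> hd vs = u \<and> last vs = v \<and>
        self_approaching vs \<and> self_approaching (rev vs))"

end

theory Submission
  imports Defs
begin



lemma seq_mono_le: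
  fixes a :: "nat \<Rightarrow> real"
  assumes "\<And>k. k + 1 < L \<Longrightarrow> a k \<le> a (k+1)" "i \<le> j" "j < L"
  shows "a i \<le> a j"
  using assms(2,3)
proof (induction j)
  case 0 then show ?case by simp
next
  case (Suc j)
  show ?case
  proof (cases "i = Suc j")
    case True then show ?thesis by simp
  next
    case False
    then have "a i \<le> a j" using Suc by simp
    also have "a j \<le> a (Suc j)" using assms(1)[of j] Suc by simp
    finally show ?thesis .
  qed
qed

lemma pp_inner:
  assumes "vs \<noteq> []" "0 \<le> s" "s \<le> real (length vs - 1)"
  shows "(nat \<lfloor>s\<rfloor> + 1 < length vs \<and>
           path_point vs s \<bullet> u = (1 - (s - of_int \<lfloor>s\<rfloor>)) * (vs ! nat \<lfloor>s\<rfloor> \<bullet> u)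
               + (s - of_int \<lfloor>s\<rfloor>) * (vs ! (nat \<lfloor>s\<rfloor> + 1) \<bullet> u))
         \<or> (nat \<lfloor>s\<rfloor> = length vs - 1 \<and> path_point vs s \<bullet> u = vs ! (length vs - 1) \<bullet> u)"
proof (cases "nat \<lfloor>s\<rfloor> + 1 < length vs")
  case True
  then show ?thesis by (simp add: path_point_def Let_def inner_add_left)
next
  case False
  have "nat \<lfloor>s\<rfloor> \<le> length vs - 1"
    using assms by (metis floor_mono floor_of_nat nat_mono nat_int of_nat_diff)
  then have "nat \<lfloor>s\<rfloor> = length vs - 1" using False by linarith
  then show ?thesis using False assms(1) by (simp add: path_point_def Let_def last_conv_nth)
qed

lemma pp_mono:
  assumes step: "\<And>k. k + 1 < length vs \<Longrightarrow> vs ! k \<bullet> u \<le> vs ! (k+1) \<bullet> u"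
    and ne: "vs \<noteq> []" and s0: "0 \<le> s" and ss: "s \<le> s'" and s'L: "s' \<le> real (length vs - 1)"
  shows "path_point vs s \<bullet> u \<le> path_point vs s' \<bullet> u"
proof -
  define a where "a k = vs ! k \<bullet> u" for k
  have am: "a i \<le> a j" if "i \<le> j" "j < length vs" for i j
    using seq_mono_le[of "length vs" a i j] step that unfolding a_def by blast
  define i where "i = nat \<lfloor>s\<rfloor>"
  define i' where "i' = nat \<lfloor>s'\<rfloor>"
  define t where "t = s - of_int \<lfloor>s\<rfloor>"
  define t' where "t' = s' - of_int \<lfloor>s'\<rfloor>"
  have t01: "0 \<le> t" "t \<le> 1" "0 \<le> t'" "t' \<le> 1" unfolding t_def t'_def by linarith+
  have ii: "i \<le> i'" unfolding i_def i'_def using ss by (simp add: floor_mono nat_mono)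
  have sL: "s \<le> real (length vs - 1)" using ss s'L by linarith
  have s'0: "0 \<le> s'" using s0 ss by linarith
  have A: "(i + 1 < length vs \<and> path_point vs s \<bullet> u = (1 - t) * a i + t * a (i+1)) \<or>
           (i = length vs - 1 \<and> path_point vs s \<bullet> u = a (length vs - 1))"
    using pp_inner[OF ne s0 sL, of u] unfolding a_def i_def t_def by simp
  have B: "(i' + 1 < length vs \<and> path_point vs s' \<bullet> u = (1 - t') * a i' + t' * a (i'+1)) \<or>
           (i' = length vs - 1 \<and> path_point vs s' \<bullet> u = a (length vs - 1))"
    using pp_inner[OF ne s'0 s'L, of u] unfolding a_def i'_def t'_def by simp
  have lo: "a i \<le> path_point vs s \<bullet> u" and hi1: "i + 1 < length vs \<Longrightarrow> path_point vs s \<bullet> u \<le> a (i+1)"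
  proof -
    show "a i \<le> path_point vs s \<bullet> u"
      using A
    proof
      assume h: "i + 1 < length vs \<and> path_point vs s \<bullet> u = (1 - t) * a i + t * a (i+1)"
      have "a i \<le> a (i+1)" using am[of i "i+1"] h by simp
      then have "t * a i \<le> t * a (i+1)" using t01 by (simp add: mult_left_mono)
      then show ?thesis using h by (simp add: algebra_simps)
    qed simp
    show "path_point vs s \<bullet> u \<le> a (i+1)" if "i + 1 < length vs"
      using A
    proof
      assume h: "i + 1 < length vs \<and> path_point vs s \<bullet> u = (1 - t) * a i + t * a (i+1)"
      have "a i \<le> a (i+1)" using am[of i "i+1"] h by simp
      then have "(1-t) * a i \<le> (1-t) * a (i+1)" using t01 by (simp add: mult_left_mono)
      then show ?thesis using h by (simp add: algebra_simps)
    qed (use that in simp)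
  qed
  have lo': "a i' \<le> path_point vs s' \<bullet> u"
    using B
  proof
    assume h: "i' + 1 < length vs \<and> path_point vs s' \<bullet> u = (1 - t') * a i' + t' * a (i'+1)"
    have "a i' \<le> a (i'+1)" using am[of i' "i'+1"] h by simp
    then have "t' * a i' \<le> t' * a (i'+1)" using t01 by (simp add: mult_left_mono)
    then show ?thesis using h by (simp add: algebra_simps)
  qed simp
  show ?thesis
  proof (cases "i = i'")
    case True
    have f0: "0 \<le> \<lfloor>s\<rfloor>" "0 \<le> \<lfloor>s'\<rfloor>" using s0 s'0 by simp_all
    have "\<lfloor>s\<rfloor> = \<lfloor>s'\<rfloor>" using True f0 unfolding i_def i'_def by (simp add: eq_nat_nat_iff)
    then have tt: "t \<le> t'" unfolding t_def t'_def using ss by linarith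
    show ?thesis
    proof (cases "i + 1 < length vs")
      case True
      have e1: "path_point vs s \<bullet> u = (1 - t) * a i + t * a (i+1)" using A True by auto
      have e2: "path_point vs s' \<bullet> u = (1 - t') * a i + t' * a (i+1)" using B True \<open>i = i'\<close> by auto
      have "a i \<le> a (i+1)" using am[of i "i+1"] True by simp
      then have "(t' - t) * a i \<le> (t' - t) * a (i+1)" using tt by (simp add: mult_left_mono)
      then show ?thesis using e1 e2 by (simp add: algebra_simps)
    next
      case False
      then show ?thesis using A B \<open>i = i'\<close> by auto
    qed
  next
    case False
    then have "i < i'" using ii by simp
    have "i' < length vs" using B ne by auto
    then have "i + 1 < length vs" using \<open>i < i'\<close> by simp
    then have "path_point vs s \<bullet> u \<le> a (i+1)" by (rule hi1)
    also have "a (i+1) \<le> a i'" using am \<open>i < i'\<close> \<open>i' < length vs\<close> by simp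
    also have "\<dots> \<le> path_point vs s' \<bullet> u" by (rule lo')
    finally show ?thesis .
  qed
qed

lemma self_app_crit:
  fixes vs :: "pt list"
  assumes ne: "vs \<noteq> []"
    and m1: "\<And>k. k + 1 < length vs \<Longrightarrow> vs ! k \<bullet> u1 \<le> vs ! (k+1) \<bullet> u1"
    and m2: "\<And>k. k + 1 < length vs \<Longrightarrow> vs ! k \<bullet> u2 \<le> vs ! (k+1) \<bullet> u2"
    and quad: "\<And>w w'. 0 \<le> w \<bullet> u1 \<Longrightarrow> 0 \<le> w \<bullet> u2 \<Longrightarrow> 0 \<le> w' \<bullet> u1 \<Longrightarrow> 0 \<le> w' \<bullet> u2 \<Longrightarrow> 0 \<le> w \<bullet> w'"
  shows "self_approaching vs"
  unfolding self_approaching_def Let_def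
proof (intro allI impI, elim conjE)
  fix s1 s2 s3 :: real
  assume h: "0 \<le> s1" "s1 < s2" "s2 < s3" "s3 \<le> real (length vs - 1)"
    "path_point vs s1 \<noteq> path_point vs s2" "path_point vs s2 \<noteq> path_point vs s3"
    "path_point vs s1 \<noteq> path_point vs s3"
  define a where "a = path_point vs s1"
  define b where "b = path_point vs s2"
  define c where "c = path_point vs s3"
  have mono: "path_point vs s \<bullet> u \<le> path_point vs s' \<bullet> u"
    if "u = u1 \<or> u = u2" "0 \<le> s" "s \<le> s'" "s' \<le> real (length vs - 1)" for s s' u
    using that pp_mono[OF _ ne, of u s s'] m1 m2 by blast
  have w1: "0 \<le> (b - a) \<bullet> u1" "0 \<le> (b - a) \<bullet> u2"
    unfolding a_def b_def inner_diff_left using mono h by (smt (verit))+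
  have w2: "0 \<le> (c - b) \<bullet> u1" "0 \<le> (c - b) \<bullet> u2"
    unfolding c_def b_def inner_diff_left using mono h by (smt (verit))+
  have ip: "0 \<le> (b - a) \<bullet> (c - b)" using quad w1 w2 by blast
  have nz: "0 < (b - a) \<bullet> (b - a)" using h(5) unfolding a_def b_def by simp
  have "(c - a) \<bullet> (c - a) = ((b - a) + (c - b)) \<bullet> ((b - a) + (c - b))" by simp
  also have "\<dots> = (b - a) \<bullet> (b - a) + 2 * ((b - a) \<bullet> (c - b)) + (c - b) \<bullet> (c - b)"
    by (simp only: inner_add_left inner_add_right inner_commute[of "c - b" "b - a"])
  finally have "(c - a) \<bullet> (c - a) = (b - a) \<bullet> (b - a) + 2 * ((b - a) \<bullet> (c - b)) + (c - b) \<bullet> (c - b)" .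
  then have "(c - b) \<bullet> (c - b) < (c - a) \<bullet> (c - a)" using ip nz by linarith
  then have "norm (c - b) < norm (c - a)" by (simp add: norm_lt)
  then show "dist b c < dist a c" by (simp add: dist_norm norm_minus_commute)
qed




definition klt :: "real \<times> nat \<Rightarrow> real \<times> nat \<Rightarrow> bool" (infix "\<lless>" 50) where
  "a \<lless> b \<longleftrightarrow> fst a < fst b \<or> (fst a = fst b \<and> snd a < snd b)"

lemma klt_trans: "a \<lless> b \<Longrightarrow> b \<lless> c \<Longrightarrow> a \<lless> c"
  unfolding klt_def by auto

lemma klt_asym: "a \<lless> b \<Longrightarrow> \<not> b \<lless> a"
  unfolding klt_def by auto

lemma klt_irrefl: "\<not> a \<lless> a"
  unfolding klt_def by auto

lemma klt_total: "a \<noteq> b \<Longrightarrow> a \<lless> b \<or> b \<lless> a"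
  unfolding klt_def by (cases a; cases b) auto


locale chain =
  fixes p :: "nat \<Rightarrow> pt" and n :: nat and d e :: pt
  assumes n2: "2 \<le> n"
  and xmono: "\<And>i j. i < j \<Longrightarrow> j < n \<Longrightarrow> p i \<bullet> d < p j \<bullet> d"
  and quad: "\<And>w w'. 0 \<le> (w \<bullet> d) * (w' \<bullet> d) \<Longrightarrow> 0 \<le> (w \<bullet> e) * (w' \<bullet> e) \<Longrightarrow> 0 \<le> w \<bullet> w'"
  and cvx: "\<And>i j k. i < j \<Longrightarrow> j < k \<Longrightarrow> k < n \<Longrightarrow>
      (p k \<bullet> d - p i \<bullet> d) * (p j \<bullet> e - p i \<bullet> e) - (p k \<bullet> e - p i \<bullet> e) * (p j \<bullet> d - p i \<bullet> d) < 0"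
begin

definition x :: "nat \<Rightarrow> real" where "x i = p i \<bullet> d"
definition y :: "nat \<Rightarrow> real" where "y i = p i \<bullet> e"
definition M :: real where "M = (\<Sum>i<n. \<bar>y i\<bar>) + 1"
definition hk :: "nat \<Rightarrow> real \<times> nat" where
  "hk i = (if i = 0 \<or> i = n - 1 then M else y i, i)"
definition yk :: "nat \<Rightarrow> real \<times> nat" where "yk i = (y i, i)"
definition vis :: "nat \<Rightarrow> nat \<Rightarrow> bool" where
  "vis i j \<longleftrightarrow> i < j \<and> j < n \<and> (\<forall>k. i < k \<longrightarrow> k < j \<longrightarrow> hk k \<lless> hk i \<and> hk k \<lless> hk j)"
definition Eidx :: "(nat \<times> nat) set" where "Eidx = {(i,j). vis i j}"
definition E :: "pt set set" where "E = (\<lambda>(i,j). {p i, p j}) ` Eidx"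

lemma inj_p: "inj_on p {..<n}"
  by (rule inj_onI) (metis lessThan_iff less_irrefl linorder_neqE_nat xmono)

lemma y_lt_M: "i < n \<Longrightarrow> y i < M"
proof -
  assume "i < n"
  then have "\<bar>y i\<bar> \<le> (\<Sum>i<n. \<bar>y i\<bar>)" by (intro member_le_sum) auto
  then show "y i < M" unfolding M_def by linarith
qed

lemma yk_le_hk: "i < n \<Longrightarrow> yk i = hk i \<or> yk i \<lless> hk i"
  using y_lt_M[of i] by (auto simp: yk_def hk_def klt_def)

lemma hk_int: "0 < i \<Longrightarrow> i < n - 1 \<Longrightarrow> hk i = yk i"
  by (simp add: hk_def yk_def)

lemma hk_inj: "hk i = hk j \<Longrightarrow> i = j"
  by (simp add: hk_def)

lemma yk_inj: "yk i = yk j \<Longrightarrow> i = j"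
  by (simp add: yk_def)

lemma hk_last: "i < n - 1 \<Longrightarrow> hk i \<lless> hk (n - 1)"
  using y_lt_M[of i] n2 by (auto simp: hk_def klt_def)

lemma hk_first: "0 < j \<Longrightarrow> j < n - 1 \<Longrightarrow> hk j \<lless> hk 0"
  using y_lt_M[of j] n2 by (auto simp: hk_def klt_def)

lemma ycvx: "i < j \<Longrightarrow> j < k \<Longrightarrow> k < n \<Longrightarrow> y j < max (y i) (y k)"
proof -
  assume h: "i < j" "j < k" "k < n"
  have c: "(x k - x i) * (y j - y i) - (y k - y i) * (x j - x i) < 0"
    using cvx[OF h] by (simp add: x_def y_def)
  have x1: "x i < x j" "x j < x k" using xmono h by (auto simp: x_def)
  show ?thesis
  proof (rule ccontr)
    assume "\<not> y j < max (y i) (y k)"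
    then have a: "y i \<le> y j" "y k \<le> y j" by auto
    have "(y k - y i) * (x j - x i) \<le> (y j - y i) * (x k - x i)"
    proof (cases "y k \<le> y i")
      case True
      have "(y k - y i) * (x j - x i) \<le> 0" using True x1 by (simp add: mult_nonpos_nonneg)
      also have "0 \<le> (y j - y i) * (x k - x i)" using a x1 by simp
      finally show ?thesis .
    next
      case False
      have "(y k - y i) * (x j - x i) \<le> (y k - y i) * (x k - x i)"
        using False x1 by (intro mult_left_mono) auto
      also have "\<dots> \<le> (y j - y i) * (x k - x i)"
        using a x1 by (intro mult_right_mono) auto
      finally show ?thesis .
    qed
    then show False using c by (simp add: algebra_simps)
  qed
qed

lemma ykcvx: "i < j \<Longrightarrow> j < k \<Longrightarrow> k < n \<Longrightarrow> yk j \<lless> yk i \<or> yk j \<lless> yk k"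
  using ycvx[of i j k] by (auto simp: yk_def klt_def max_def split: if_splits)

definition nhr :: "nat \<Rightarrow> nat" where
  "nhr i = (LEAST j. i < j \<and> j < n \<and> hk i \<lless> hk j)"

definition nhl :: "nat \<Rightarrow> nat" where
  "nhl j = Max {i. i < j \<and> hk j \<lless> hk i}"

lemma nhr_prop: assumes "i < n - 1"
  shows "i < nhr i \<and> nhr i < n \<and> hk i \<lless> hk (nhr i)"
    and "\<And>k. i < k \<Longrightarrow> k < nhr i \<Longrightarrow> hk k \<lless> hk i"
proof -
  have ex: "i < n - 1 \<and> n - 1 < n \<and> hk i \<lless> hk (n - 1)" using assms hk_last n2 by auto
  show P: "i < nhr i \<and> nhr i < n \<and> hk i \<lless> hk (nhr i)"
    unfolding nhr_def by (rule LeastI[of _ "n - 1"]) (use ex in blast)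
  fix k assume k: "i < k" "k < nhr i"
  have "\<not> (i < k \<and> k < n \<and> hk i \<lless> hk k)" unfolding nhr_def
    by (rule not_less_Least) (use k in \<open>simp add: nhr_def\<close>)
  then have "\<not> hk i \<lless> hk k" using k P by auto
  moreover have "hk k \<noteq> hk i" using k hk_inj by auto
  ultimately show "hk k \<lless> hk i" using klt_total by blast
qed

lemma nhl_prop: assumes "0 < j" "j < n - 1"
  shows "nhl j < j \<and> hk j \<lless> hk (nhl j)"
    and "\<And>k. nhl j < k \<Longrightarrow> k < j \<Longrightarrow> hk k \<lless> hk j"
proof -
  let ?S = "{i. i < j \<and> hk j \<lless> hk i}"
  have fin: "finite ?S" by (rule finite_subset[of _ "{..<j}"]) auto
  have ne: "0 \<in> ?S" using assms hk_first by auto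
  show P: "nhl j < j \<and> hk j \<lless> hk (nhl j)"
  proof -
    have "Max ?S \<in> ?S" using Max_in[OF fin] ne by blast
    then show ?thesis unfolding nhl_def by simp
  qed
  fix k assume k: "nhl j < k" "k < j"
  have "k \<notin> ?S"
  proof
    assume "k \<in> ?S"
    then have "k \<le> Max ?S" using Max_ge[OF fin] by blast
    then show False using k unfolding nhl_def by simp
  qed
  then have "\<not> hk j \<lless> hk k" using k by auto
  moreover have "hk k \<noteq> hk j" using k hk_inj by auto
  ultimately show "hk k \<lless> hk j" using klt_total by blast
qed

lemma A_eq: "{(i,j) \<in> Eidx. hk i \<lless> hk j} = (\<lambda>i. (i, nhr i)) ` {..<n - 1}"
proof (intro equalityI subsetI)
  fix ij assume "ij \<in> {(i,j) \<in> Eidx. hk i \<lless> hk j}"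
  then obtain i j where ij: "ij = (i,j)" "vis i j" "hk i \<lless> hk j" by (auto simp: Eidx_def)
  have "i < n - 1" using ij(2) unfolding vis_def by auto
  have "nhr i = j"
    unfolding nhr_def
  proof (rule Least_equality)
    show "i < j \<and> j < n \<and> hk i \<lless> hk j" using ij unfolding vis_def by auto
    fix j' assume j': "i < j' \<and> j' < n \<and> hk i \<lless> hk j'"
    show "j \<le> j'"
    proof (rule ccontr)
      assume "\<not> j \<le> j'"
      then have "hk j' \<lless> hk i" using ij(2) j' unfolding vis_def by auto
      then show False using j' klt_asym by blast
    qed
  qed
  then show "ij \<in> (\<lambda>i. (i, nhr i)) ` {..<n - 1}" using ij \<open>i < n - 1\<close> by auto
next
  fix ij assume "ij \<in> (\<lambda>i. (i, nhr i)) ` {..<n - 1}"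
  then obtain i where i: "ij = (i, nhr i)" "i < n - 1" by auto
  note P = nhr_prop[OF i(2)]
  have "vis i (nhr i)" unfolding vis_def
    using P klt_trans by blast
  then show "ij \<in> {(i,j) \<in> Eidx. hk i \<lless> hk j}" using i P by (auto simp: Eidx_def)
qed

lemma B_eq: "{(i,j) \<in> Eidx. hk j \<lless> hk i} = (\<lambda>j. (nhl j, j)) ` {0<..<n - 1}"
proof (intro equalityI subsetI)
  fix ij assume "ij \<in> {(i,j) \<in> Eidx. hk j \<lless> hk i}"
  then obtain i j where ij: "ij = (i,j)" "vis i j" "hk j \<lless> hk i" by (auto simp: Eidx_def)
  have j0: "0 < j" using ij(2) unfolding vis_def by auto
  have jn: "j < n - 1"
  proof (rule ccontr)
    assume "\<not> j < n - 1"
    then have "j = n - 1" using ij(2) unfolding vis_def by auto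
    moreover have "i < n - 1" using ij(2) unfolding vis_def by auto
    ultimately show False using hk_last[of i] ij(3) klt_asym by blast
  qed
  let ?S = "{i. i < j \<and> hk j \<lless> hk i}"
  have fin: "finite ?S" by (rule finite_subset[of _ "{..<j}"]) auto
  have "nhl j = i" unfolding nhl_def
  proof (rule Max_eqI[OF fin])
    show "i \<in> ?S" using ij unfolding vis_def by auto
    fix i' assume i': "i' \<in> ?S"
    show "i' \<le> i"
    proof (rule ccontr)
      assume "\<not> i' \<le> i"
      then have "hk i' \<lless> hk j" using ij(2) i' unfolding vis_def by auto
      then show False using i' klt_asym by blast
    qed
  qed
  then show "ij \<in> (\<lambda>j. (nhl j, j)) ` {0<..<n - 1}" using ij j0 jn by auto
next
  fix ij assume "ij \<in> (\<lambda>j. (nhl j, j)) ` {0<..<n - 1}"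
  then obtain j where j: "ij = (nhl j, j)" "0 < j" "j < n - 1" by auto
  note P = nhl_prop[OF j(2,3)]
  have "vis (nhl j) j" unfolding vis_def
  proof (intro conjI allI impI)
    show "nhl j < j" using P by simp
    show "j < n" using j by simp
    fix k assume k: "nhl j < k" "k < j"
    show "hk k \<lless> hk j" using P(2) k .
    then show "hk k \<lless> hk (nhl j)" using P(1) klt_trans by blast
  qed
  then show "ij \<in> {(i,j) \<in> Eidx. hk j \<lless> hk i}" using j P by (auto simp: Eidx_def)
qed

lemma card_Eidx: "card Eidx = 2 * n - 3"
proof -
  have split: "Eidx = {(i,j) \<in> Eidx. hk i \<lless> hk j} \<union> {(i,j) \<in> Eidx. hk j \<lless> hk i}"
  proof (intro equalityI subsetI)
    fix ij assume "ij \<in> Eidx"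
    then obtain i j where "ij = (i,j)" "vis i j" by (auto simp: Eidx_def)
    then have "hk i \<noteq> hk j" using hk_inj unfolding vis_def by auto
    then show "ij \<in> {(i,j) \<in> Eidx. hk i \<lless> hk j} \<union> {(i,j) \<in> Eidx. hk j \<lless> hk i}"
      using klt_total \<open>ij \<in> Eidx\<close> \<open>ij = (i,j)\<close> by blast
  qed auto
  have fin: "finite Eidx" by (rule finite_subset[of _ "{..<n} \<times> {..<n}"]) (auto simp: Eidx_def vis_def)
  have disj: "{(i,j) \<in> Eidx. hk i \<lless> hk j} \<inter> {(i,j) \<in> Eidx. hk j \<lless> hk i} = {}"
    by (auto simp: klt_def)
  have cA: "card {(i,j) \<in> Eidx. hk i \<lless> hk j} = n - 1"
    unfolding A_eq by (subst card_image) (auto simp: inj_on_def)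
  have cB: "card {(i,j) \<in> Eidx. hk j \<lless> hk i} = n - 2"
    unfolding B_eq by (subst card_image) (auto simp: inj_on_def)
  have "card Eidx = (n - 1) + (n - 2)"
    using card_Un_disjoint[of "{(i,j) \<in> Eidx. hk i \<lless> hk j}" "{(i,j) \<in> Eidx. hk j \<lless> hk i}"] fin disj cA cB split
    by (metis (no_types, lifting) finite_Un)
  then show ?thesis using n2 by simp
qed

lemma card_E: "card E = 2 * n - 3"
proof -
  have "inj_on (\<lambda>(i,j). {p i, p j}) Eidx"
  proof (rule inj_onI, clarify)
    fix i j i' j' assume h: "(i,j) \<in> Eidx" "(i',j') \<in> Eidx" "{p i, p j} = {p i', p j'}"
    have o: "i < j" "j < n" "i' < j'" "j' < n" using h(1,2) by (auto simp: Eidx_def vis_def)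
    have pi: "\<And>a b. a < n \<Longrightarrow> b < n \<Longrightarrow> p a = p b \<Longrightarrow> a = b" using inj_p by (auto dest: inj_onD)
    from h(3) have "(p i = p i' \<and> p j = p j') \<or> (p i = p j' \<and> p j = p i')" by (auto simp: doubleton_eq_iff)
    then show "i = i' \<and> j = j'" using pi o by (metis less_trans not_less_iff_gr_or_eq)
  qed
  then show ?thesis unfolding E_def using card_Eidx by (simp add: card_image)
qed

end



lemma graph_path_rev: "graph_path E vs \<Longrightarrow> graph_path E (rev vs)"
  unfolding graph_path_def
proof (elim conjE, intro conjI allI impI)
  assume h: "vs \<noteq> []" "distinct vs" "\<forall>i. i + 1 < length vs \<longrightarrow> {vs ! i, vs ! (i + 1)} \<in> E"
  show "rev vs \<noteq> []" "distinct (rev vs)" using h by auto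
  fix i assume i: "i + 1 < length (rev vs)"
  define j where "j = length vs - Suc (Suc i)"
  have j: "j + 1 < length vs" "Suc j = length vs - Suc i" using i unfolding j_def by auto
  have e1: "rev vs ! i = vs ! (j + 1)" using i j by (simp add: rev_nth)
  have e2: "rev vs ! (i + 1) = vs ! j" using i by (simp add: rev_nth j_def)
  have "{vs ! j, vs ! (j + 1)} \<in> E" using h(3) j(1) by blast
  then show "{rev vs ! i, rev vs ! (i + 1)} \<in> E" unfolding e1 e2 by (simp add: insert_commute)
qed

lemma rev_step:
  assumes "\<And>k. k + 1 < length vs \<Longrightarrow> vs ! k \<bullet> u \<le> vs ! (k+1) \<bullet> u"
    and "k + 1 < length (rev vs)"
  shows "rev vs ! k \<bullet> (- u) \<le> rev vs ! (k+1) \<bullet> (- u)"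
proof -
  define j where "j = length vs - Suc (Suc k)"
  have j: "j + 1 < length vs" using assms(2) unfolding j_def by auto
  have "rev vs ! k = vs ! (j + 1)" "rev vs ! (k + 1) = vs ! j"
    using assms(2) by (auto simp: rev_nth j_def Suc_diff_Suc)
  then show ?thesis using assms(1)[OF j] by simp
qed

lemma self_app_single: "self_approaching [u]"
  unfolding self_approaching_def by auto

lemma seg_pair: "edge_seg {a, b} = closed_segment a b"
  unfolding edge_seg_def
  by (auto simp: closed_segment_commute)

context chain begin

lemma quad2:
  assumes "0 \<le> w \<bullet> u1" "0 \<le> w \<bullet> u2" "0 \<le> w' \<bullet> u1" "0 \<le> w' \<bullet> u2"
    "u1 = d \<or> u1 = - d" "u2 = e \<or> u2 = - e"
  shows "0 \<le> w \<bullet> w'"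
proof (rule quad)
  have "(w \<bullet> d) * (w' \<bullet> d) = (w \<bullet> u1) * (w' \<bullet> u1)" using assms(5) by auto
  then show "0 \<le> (w \<bullet> d) * (w' \<bullet> d)" using assms by simp
  have "(w \<bullet> e) * (w' \<bullet> e) = (w \<bullet> u2) * (w' \<bullet> u2)" using assms(6) by auto
  then show "0 \<le> (w \<bullet> e) * (w' \<bullet> e)" using assms by simp
qed

lemma path_down:
  "t < n \<Longrightarrow> s < t \<Longrightarrow> yk t \<lless> yk s \<Longrightarrow>
   \<exists>is. is \<noteq> [] \<and> hd is = s \<and> last is = t \<and> set is \<subseteq> {s..t} \<and>
        successively (\<lambda>a b. vis a b \<and> yk b \<lless> yk a) is"
proof (induction "t - s" arbitrary: s rule: less_induct)
  case less
  show ?case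
  proof (cases "vis s t")
    case True then show ?thesis by (intro exI[of _ "[s,t]"]) (use less in auto)
  next
    case False
    then obtain k where k: "s < k" "k < t" "\<not> (hk k \<lless> hk s \<and> hk k \<lless> hk t)"
      using less unfolding vis_def by auto
    have kint: "0 < k" "k < n - 1" using k less by auto
    have hkk: "hk k = yk k" by (rule hk_int[OF kint])
    have tk: "yk t \<lless> yk k"
    proof (cases "hk k \<lless> hk s")
      case False
      then have "hk s \<lless> hk k" using klt_total hk_inj k by (metis less_irrefl)
      moreover have "yk s = hk s \<or> yk s \<lless> hk s" using yk_le_hk less by simp
      ultimately have "yk s \<lless> yk k" using hkk klt_trans by metis
      then show ?thesis using less klt_trans by blast
    next
      case True
      then have "\<not> hk k \<lless> hk t" using k by blast
      then have "hk t \<lless> hk k" using klt_total hk_inj k by (metis less_irrefl)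
      moreover have "yk t = hk t \<or> yk t \<lless> hk t" using yk_le_hk less by simp
      ultimately show ?thesis using hkk klt_trans by metis
    qed
    have s1: "yk t \<lless> yk (s+1)"
    proof (cases "s + 1 = k")
      case True then show ?thesis using tk by simp
    next
      case False
      then have "s + 1 < k" using k by simp
      then have "yk k \<lless> yk (s+1) \<or> yk k \<lless> yk t" using ykcvx[of "s+1" k t] k less by simp
      then show ?thesis using tk klt_asym klt_trans by blast
    qed
    have s2: "yk (s+1) \<lless> yk s"
    proof (cases "s + 1 = t")
      case True then show ?thesis using less by simp
    next
      case False
      then have "yk (s+1) \<lless> yk s \<or> yk (s+1) \<lless> yk t" using ykcvx[of s "s+1" t] k less by simp
      then show ?thesis using s1 klt_asym by blast
    qed
    have st: "s + 1 < t" using k by simp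
    obtain is' where is': "is' \<noteq> []" "hd is' = s + 1" "last is' = t" "set is' \<subseteq> {s+1..t}"
      "successively (\<lambda>a b. vis a b \<and> yk b \<lless> yk a) is'"
    proof -
      have "\<exists>is. is \<noteq> [] \<and> hd is = s + 1 \<and> last is = t \<and> set is \<subseteq> {s+1..t} \<and>
        successively (\<lambda>a b. vis a b \<and> yk b \<lless> yk a) is"
        by (rule less.hyps) (use st s1 less in auto)
      then show ?thesis using that by blast
    qed
    have vs: "vis s (s+1)" unfolding vis_def using st less by auto
    show ?thesis
    proof (intro exI[of _ "s # is'"] conjI)
      show "successively (\<lambda>a b. vis a b \<and> yk b \<lless> yk a) (s # is')"
        using is' vs s2 by (cases is') auto
      have "\<forall>x\<in>set is'. s + 1 \<le> x \<and> x \<le> t" using is'(4) by auto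
      then show "set (s # is') \<subseteq> {s..t}" using st by auto
    qed (use is' in auto)
  qed
qed

lemma path_up:
  "t < n \<Longrightarrow> s < t \<Longrightarrow> yk s \<lless> yk t \<Longrightarrow>
   \<exists>is. is \<noteq> [] \<and> hd is = s \<and> last is = t \<and> set is \<subseteq> {s..t} \<and>
        successively (\<lambda>a b. vis a b \<and> yk a \<lless> yk b) is"
proof (induction "t - s" arbitrary: t rule: less_induct)
  case less
  show ?case
  proof (cases "vis s t")
    case True then show ?thesis by (intro exI[of _ "[s,t]"]) (use less in auto)
  next
    case False
    then obtain k where k: "s < k" "k < t" "\<not> (hk k \<lless> hk s \<and> hk k \<lless> hk t)"
      using less unfolding vis_def by auto
    have kint: "0 < k" "k < n - 1" using k less by auto
    have hkk: "hk k = yk k" by (rule hk_int[OF kint])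
    have sk: "yk s \<lless> yk k"
    proof (cases "hk k \<lless> hk t")
      case False
      then have "hk t \<lless> hk k" using klt_total hk_inj k by (metis less_irrefl)
      moreover have "yk t = hk t \<or> yk t \<lless> hk t" using yk_le_hk less by simp
      ultimately have "yk t \<lless> yk k" using hkk klt_trans by metis
      then show ?thesis using less klt_trans by blast
    next
      case True
      then have "\<not> hk k \<lless> hk s" using k by blast
      then have "hk s \<lless> hk k" using klt_total hk_inj k by (metis less_irrefl)
      moreover have "yk s = hk s \<or> yk s \<lless> hk s" using yk_le_hk less by simp
      ultimately show ?thesis using hkk klt_trans by metis
    qed
    have t1: "yk s \<lless> yk (t-1)"
    proof (cases "t - 1 = k")
      case True then show ?thesis using sk by simp
    next
      case False
      then have "k < t - 1" using k by simp
      then have "yk k \<lless> yk s \<or> yk k \<lless> yk (t-1)" using ykcvx[of s k "t-1"] k less by simp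
      then show ?thesis using sk klt_asym klt_trans by blast
    qed
    have t2: "yk (t-1) \<lless> yk t"
    proof (cases "s = t - 1")
      case True then show ?thesis using less by simp
    next
      case False
      then have "yk (t-1) \<lless> yk s \<or> yk (t-1) \<lless> yk t" using ykcvx[of s "t-1" t] k less by simp
      then show ?thesis using t1 klt_asym by blast
    qed
    have st: "s < t - 1" using k by simp
    obtain is' where is': "is' \<noteq> []" "hd is' = s" "last is' = t - 1" "set is' \<subseteq> {s..t-1}"
      "successively (\<lambda>a b. vis a b \<and> yk a \<lless> yk b) is'"
    proof -
      have "\<exists>is. is \<noteq> [] \<and> hd is = s \<and> last is = t - 1 \<and> set is \<subseteq> {s..t-1} \<and>
        successively (\<lambda>a b. vis a b \<and> yk a \<lless> yk b) is"
        by (rule less.hyps) (use st t1 less in auto)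
      then show ?thesis using that by blast
    qed
    have vs: "vis (t-1) t" unfolding vis_def using st less by auto
    show ?thesis
    proof (intro exI[of _ "is' @ [t]"] conjI)
      show "successively (\<lambda>a b. vis a b \<and> yk a \<lless> yk b) (is' @ [t])"
        using is' vs t2 by (simp add: successively_append_iff)
      show "hd (is' @ [t]) = s" using is' by simp
      have "\<forall>x\<in>set is'. s \<le> x \<and> x \<le> t - 1" using is'(4) by auto
      then show "set (is' @ [t]) \<subseteq> {s..t}" using st by auto
    qed (use is' in auto)
  qed
qed

lemma idx_path_good:
  assumes ne: "is \<noteq> []" and sub: "set is \<subseteq> {..<n}" and suc: "successively vis is"
    and ym: "(\<forall>k. k + 1 < length is \<longrightarrow> y (is ! k) \<le> y (is ! (k+1))) \<or>
             (\<forall>k. k + 1 < length is \<longrightarrow> y (is ! (k+1)) \<le> y (is ! k))"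
  shows "graph_path E (map p is) \<and> self_approaching (map p is) \<and> self_approaching (rev (map p is))"
proof -
  have lt: "is ! k < is ! (k+1)" "is ! (k+1) < n" if "k + 1 < length is" for k
    using successively_nth[OF suc, of k] that unfolding vis_def by auto
  have sw: "sorted_wrt (<) is"
  proof -
    have "successively (<) is" using suc by (rule successively_mono) (simp add: vis_def)
    then show ?thesis by (simp add: successively_conv_sorted_wrt transp_def)
  qed
  then have dis: "distinct is" by (simp add: strict_sorted_iff)
  have gp: "graph_path E (map p is)"
    unfolding graph_path_def
  proof (intro conjI allI impI)
    show "map p is \<noteq> []" using ne by simp
    show "distinct (map p is)" using dis inj_p sub by (simp add: distinct_map inj_on_subset)
    fix i assume i: "i + 1 < length (map p is)"
    then have "vis (is ! i) (is ! (i+1))" using successively_nth[OF suc, of i] by simp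
    then have "(is ! i, is ! (i+1)) \<in> Eidx" by (simp add: Eidx_def)
    then have "{p (is ! i), p (is ! (i+1))} \<in> E" unfolding E_def by force
    then show "{map p is ! i, map p is ! (i + 1)} \<in> E" using i by simp
  qed
  have md: "map p is ! k \<bullet> d \<le> map p is ! (k+1) \<bullet> d" if "k + 1 < length (map p is)" for k
    using xmono[OF lt[of k]] that by simp
  obtain u2 where u2: "u2 = e \<or> u2 = - e"
    and me: "\<And>k. k + 1 < length (map p is) \<Longrightarrow> map p is ! k \<bullet> u2 \<le> map p is ! (k+1) \<bullet> u2"
  proof (cases "\<forall>k. k + 1 < length is \<longrightarrow> y (is ! k) \<le> y (is ! (k+1))")
    case True
    show ?thesis by (rule that[of e]) (use True in \<open>auto simp: y_def\<close>)
  next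
    case False
    then have "\<forall>k. k + 1 < length is \<longrightarrow> y (is ! (k+1)) \<le> y (is ! k)" using ym by blast
    show ?thesis by (rule that[of "- e"]) (use \<open>\<forall>k. k + 1 < length is \<longrightarrow> y (is ! (k+1)) \<le> y (is ! k)\<close> in \<open>auto simp: y_def\<close>)
  qed
  have sa1: "self_approaching (map p is)"
    by (rule self_app_crit[OF _ md me]) (use ne quad2 u2 in \<open>blast+\<close>)
  have sa2: "self_approaching (rev (map p is))"
  proof (rule self_app_crit[of _ "- d" "- u2"])
    show "rev (map p is) \<noteq> []" using ne by simp
    show "\<And>k. k + 1 < length (rev (map p is)) \<Longrightarrow> rev (map p is) ! k \<bullet> - d \<le> rev (map p is) ! (k + 1) \<bullet> - d"
      by (rule rev_step) (use md in auto)
    show "\<And>k. k + 1 < length (rev (map p is)) \<Longrightarrow> rev (map p is) ! k \<bullet> - u2 \<le> rev (map p is) ! (k + 1) \<bullet> - u2"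
      by (rule rev_step) (use me in auto)
    show "\<And>w w'. 0 \<le> w \<bullet> - d \<Longrightarrow> 0 \<le> w \<bullet> - u2 \<Longrightarrow> 0 \<le> w' \<bullet> - d \<Longrightarrow> 0 \<le> w' \<bullet> - u2 \<Longrightarrow> 0 \<le> w \<bullet> w'"
    proof -
      fix w w' :: pt
      assume a: "0 \<le> w \<bullet> - d" "0 \<le> w \<bullet> - u2" "0 \<le> w' \<bullet> - d" "0 \<le> w' \<bullet> - u2"
      have "- u2 = e \<or> - u2 = - e" using u2 by auto
      then show "0 \<le> w \<bullet> w'" using quad2[OF a] by auto
    qed
  qed
  show ?thesis using gp sa1 sa2 by blast
qed

end



context chain begin

lemma path_between:
  assumes "s < t" "t < n"
  shows "\<exists>vs. hd vs = p s \<and> last vs = p t \<and> graph_path E vs \<and> self_approaching vs \<and> self_approaching (rev vs)"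
proof -
  have "yk s \<noteq> yk t" using assms yk_inj by auto
  then have "yk t \<lless> yk s \<or> yk s \<lless> yk t" using klt_total by blast
  then obtain ixs where ixs: "ixs \<noteq> []" "hd ixs = s" "last ixs = t" "set ixs \<subseteq> {s..t}" "successively vis ixs"
    "(\<forall>k. k + 1 < length ixs \<longrightarrow> y (ixs ! k) \<le> y (ixs ! (k+1))) \<or>
     (\<forall>k. k + 1 < length ixs \<longrightarrow> y (ixs ! (k+1)) \<le> y (ixs ! k))"
  proof
    assume "yk t \<lless> yk s"
    then obtain ixs where h: "ixs \<noteq> []" "hd ixs = s" "last ixs = t" "set ixs \<subseteq> {s..t}"
        "successively (\<lambda>a b. vis a b \<and> yk b \<lless> yk a) ixs"
      using path_down assms by blast
    have "successively vis ixs" using h(5) by (rule successively_mono) simp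
    moreover have "\<forall>k. k + 1 < length ixs \<longrightarrow> y (ixs ! (k+1)) \<le> y (ixs ! k)"
    proof (intro allI impI)
      fix k assume "k + 1 < length ixs"
      then have "vis (ixs ! k) (ixs ! (k+1)) \<and> yk (ixs ! (k+1)) \<lless> yk (ixs ! k)" using successively_nth[OF h(5), of k] by simp
      then show "y (ixs ! (k+1)) \<le> y (ixs ! k)" by (auto simp: klt_def yk_def)
    qed
    ultimately show thesis using that h by blast
  next
    assume "yk s \<lless> yk t"
    then obtain ixs where h: "ixs \<noteq> []" "hd ixs = s" "last ixs = t" "set ixs \<subseteq> {s..t}"
        "successively (\<lambda>a b. vis a b \<and> yk a \<lless> yk b) ixs"
      using path_up assms by blast
    have "successively vis ixs" using h(5) by (rule successively_mono) simp
    moreover have "\<forall>k. k + 1 < length ixs \<longrightarrow> y (ixs ! k) \<le> y (ixs ! (k+1))"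
    proof (intro allI impI)
      fix k assume "k + 1 < length ixs"
      then have "vis (ixs ! k) (ixs ! (k+1)) \<and> yk (ixs ! k) \<lless> yk (ixs ! (k+1))" using successively_nth[OF h(5), of k] by simp
      then show "y (ixs ! k) \<le> y (ixs ! (k+1))" by (auto simp: klt_def yk_def)
    qed
    ultimately show thesis using that h by blast
  qed
  have sub: "set ixs \<subseteq> {..<n}" using ixs(4) assms by auto
  have g: "graph_path E (map p ixs) \<and> self_approaching (map p ixs) \<and> self_approaching (rev (map p ixs))"
    by (rule idx_path_good[OF ixs(1) sub ixs(5,6)])
  show ?thesis
    by (rule exI[of _ "map p ixs"]) (use g ixs in \<open>auto simp: hd_map last_map\<close>)
qed

lemma inc_chord: "increasing_chord (p ` {..<n}) E"
  unfolding increasing_chord_def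
proof (intro ballI)
  fix u v assume "u \<in> p ` {..<n}" "v \<in> p ` {..<n}"
  then obtain s t where st: "s < n" "t < n" "u = p s" "v = p t" by auto
  consider "s = t" | "s < t" | "t < s" by linarith
  then show "\<exists>vs. graph_path E vs \<and> hd vs = u \<and> last vs = v \<and> self_approaching vs \<and> self_approaching (rev vs)"
  proof cases
    case 1
    show ?thesis
      by (rule exI[of _ "[u]"]) (use 1 st in \<open>auto simp: graph_path_def self_app_single\<close>)
  next
    case 2
    then show ?thesis using path_between[of s t] st by blast
  next
    case 3
    then obtain vs where vs: "hd vs = p t" "last vs = p s" "graph_path E vs" "self_approaching vs" "self_approaching (rev vs)"
      using path_between[of t s] st by blast
    have "vs \<noteq> []" using vs(3) unfolding graph_path_def by simp
    then show ?thesis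
      using vs st graph_path_rev[OF vs(3)] by (intro exI[of _ "rev vs"]) (auto simp: hd_rev last_rev)
  qed
qed

lemma geo_graph: "geometric_graph (p ` {..<n}) E"
  unfolding geometric_graph_def E_def Eidx_def
proof clarify
  fix i j assume "vis i j"
  then have "i < j" "j < n" unfolding vis_def by auto
  then have "p i \<noteq> p j" using inj_p by (auto dest: inj_onD)
  then show "{p i, p j} \<subseteq> p ` {..<n} \<and> card {p i, p j} = 2" using \<open>i < j\<close> \<open>j < n\<close> by auto
qed

definition Lf :: "nat \<Rightarrow> nat \<Rightarrow> pt \<Rightarrow> real" where
  "Lf i j q = (x j - x i) * (q \<bullet> e - y i) - (y j - y i) * (q \<bullet> d - x i)"

lemma Lf_comb: "Lf i j ((1 - u) *\<^sub>R a + u *\<^sub>R b) = (1 - u) * Lf i j a + u * Lf i j b"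
  unfolding Lf_def by (simp add: inner_add_left algebra_simps)

lemma Lf_ends: "Lf i j (p i) = 0" "Lf i j (p j) = 0"
  unfolding Lf_def by (simp_all add: x_def y_def)

lemma Lf_in: "i < m \<Longrightarrow> m < j \<Longrightarrow> j < n \<Longrightarrow> Lf i j (p m) < 0"
  using cvx[of i m j] unfolding Lf_def by (simp add: x_def y_def)

lemma Lf_seg: "q \<in> closed_segment (p i) (p j) \<Longrightarrow> Lf i j q = 0"
  by (auto simp: in_segment Lf_comb Lf_ends)

lemma seg_nested:
  assumes "i \<le> k" "k < l" "l \<le> j" "j < n" "(i,j) \<noteq> (k,l)"
    and q1: "q \<in> closed_segment (p i) (p j)" and q2: "q \<in> closed_segment (p k) (p l)"
  shows "q \<in> {p i, p j} \<inter> {p k, p l}"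
proof -
  obtain u where u: "0 \<le> u" "u \<le> 1" "q = (1 - u) *\<^sub>R p k + u *\<^sub>R p l" using q2 by (auto simp: in_segment)
  have z: "(1 - u) * Lf i j (p k) + u * Lf i j (p l) = 0" using Lf_seg[OF q1] u(3) Lf_comb by simp
  consider "k = i" | "i < k" "l = j" | "i < k" "l < j" using assms by linarith
  then show ?thesis
  proof cases
    case 1
    then have "l < j" using assms by auto
    then have "Lf i j (p l) < 0" using Lf_in assms 1 by simp
    then have "u = 0" using z 1 Lf_ends by simp
    then show ?thesis using u 1 by simp
  next
    case 2
    then have "Lf i j (p k) < 0" using Lf_in assms by simp
    then have "u = 1" using z 2 Lf_ends by simp
    then show ?thesis using u 2 by simp
  next
    case 3
    then have a: "Lf i j (p k) < 0" "Lf i j (p l) < 0" using Lf_in assms by simp_all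
    have "(1 - u) * Lf i j (p k) \<le> 0" "u * Lf i j (p l) \<le> 0"
      using a u by (simp_all add: mult_nonneg_nonpos)
    then have "(1 - u) * Lf i j (p k) = 0" "u * Lf i j (p l) = 0" using z by linarith+
    then show ?thesis using a by simp
  qed
qed

lemma seg_x: assumes "a < b" "b < n" "q \<in> closed_segment (p a) (p b)"
  shows "x a \<le> q \<bullet> d" "q \<bullet> d \<le> x b"
proof -
  obtain u where u: "0 \<le> u" "u \<le> 1" "q = (1 - u) *\<^sub>R p a + u *\<^sub>R p b" using assms(3) by (auto simp: in_segment)
  have qd: "q \<bullet> d = (1 - u) * x a + u * x b" using u(3) by (simp add: inner_add_left x_def)
  have "x a < x b" using xmono assms by (simp add: x_def)
  have h1: "q \<bullet> d - x a = u * (x b - x a)" unfolding qd by (simp add: algebra_simps)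
  have h2: "x b - q \<bullet> d = (1 - u) * (x b - x a)" unfolding qd by (simp add: algebra_simps)
  have g1: "0 \<le> u * (x b - x a)" using u \<open>x a < x b\<close> by simp
  have g2: "0 \<le> (1 - u) * (x b - x a)" using u \<open>x a < x b\<close> by simp
  show "x a \<le> q \<bullet> d" using h1 g1 by linarith
  show "q \<bullet> d \<le> x b" using h2 g2 by linarith
qed

lemma seg_disj:
  assumes "i < j" "j \<le> k" "k < l" "l < n"
    and q1: "q \<in> closed_segment (p i) (p j)" and q2: "q \<in> closed_segment (p k) (p l)"
  shows "q \<in> {p i, p j} \<inter> {p k, p l}"
proof -
  have a: "q \<bullet> d \<le> x j" using seg_x(2)[OF assms(1) _ q1] assms by simp
  have b: "x k \<le> q \<bullet> d" using seg_x(1)[OF assms(3,4) q2] .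
  have "j = k"
  proof (rule ccontr)
    assume "j \<noteq> k"
    then have "x j < x k" using xmono assms by (simp add: x_def)
    then show False using a b by simp
  qed
  then have qx: "q \<bullet> d = x j" using a b by simp
  obtain u where u: "0 \<le> u" "u \<le> 1" "q = (1 - u) *\<^sub>R p i + u *\<^sub>R p j" using q1 by (auto simp: in_segment)
  have qd: "q \<bullet> d = (1 - u) * x i + u * x j" using u(3) by (simp add: inner_add_left x_def)
  have "x i < x j" using xmono assms by (simp add: x_def)
  have "(1 - u) * (x i - x j) = 0" using qx qd by (simp add: algebra_simps)
  then have "u = 1" using \<open>x i < x j\<close> by simp
  then show ?thesis using u \<open>j = k\<close> by simp
qed

lemma seg_any:
  assumes "i < j" "j < n" "k < l" "l < n" "(i,j) \<noteq> (k,l)"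
    and ni1: "\<not> (i < k \<and> k < j \<and> j < l)" and ni2: "\<not> (k < i \<and> i < l \<and> l < j)"
  shows "closed_segment (p i) (p j) \<inter> closed_segment (p k) (p l) \<subseteq> {p i, p j} \<inter> {p k, p l}"
proof
  fix q assume q: "q \<in> closed_segment (p i) (p j) \<inter> closed_segment (p k) (p l)"
  consider "j \<le> k" | "l \<le> i" | "i \<le> k" "l \<le> j" | "k \<le> i" "j \<le> l" using assms by linarith
  then show "q \<in> {p i, p j} \<inter> {p k, p l}"
  proof cases
    case 1 then show ?thesis using seg_disj[of i j k l q] assms q by blast
  next
    case 2 then show ?thesis using seg_disj[of k l i j q] assms q by blast
  next
    case 3 then show ?thesis using seg_nested[of i k l j q] assms q by blast
  next
    case 4
    have "(k,l) \<noteq> (i,j)" using assms(5) by auto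
    then have "q \<in> {p k, p l} \<inter> {p i, p j}" using seg_nested[of k i j l q] 4 assms q by blast
    then show ?thesis by blast
  qed
qed

lemma planar: "planar_gg E"
  unfolding planar_gg_def
proof (intro ballI impI)
  fix e1 e2 assume e: "e1 \<in> E" "e2 \<in> E" "e1 \<noteq> e2"
  obtain i j where ij: "e1 = {p i, p j}" "vis i j" using e(1) unfolding E_def Eidx_def by auto
  obtain k l where kl: "e2 = {p k, p l}" "vis k l" using e(2) unfolding E_def Eidx_def by auto
  have o: "i < j" "j < n" "k < l" "l < n" using ij kl unfolding vis_def by auto
  have ne: "(i,j) \<noteq> (k,l)" using e ij kl by auto
  have ni1: "\<not> (i < k \<and> k < j \<and> j < l)"
  proof
    assume h: "i < k \<and> k < j \<and> j < l"
    then have "hk k \<lless> hk j" using ij(2) unfolding vis_def by auto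
    moreover have "hk j \<lless> hk k" using h kl(2) unfolding vis_def by auto
    ultimately show False using klt_asym by blast
  qed
  have ni2: "\<not> (k < i \<and> i < l \<and> l < j)"
  proof
    assume h: "k < i \<and> i < l \<and> l < j"
    then have "hk i \<lless> hk l" using kl(2) unfolding vis_def by auto
    moreover have "hk l \<lless> hk i" using h ij(2) unfolding vis_def by auto
    ultimately show False using klt_asym by blast
  qed
  show "edge_seg e1 \<inter> edge_seg e2 \<subseteq> e1 \<inter> e2"
    unfolding ij kl seg_pair using seg_any[OF o ne ni1 ni2] .
qed

theorem chain_main:
  "\<exists>E. geometric_graph (p ` {..<n}) E \<and> planar_gg E \<and> increasing_chord (p ` {..<n}) E \<and> card E = 2 * n - 3"
  using geo_graph planar inc_chord card_E by blast

end



definition rot :: "pt \<Rightarrow> pt" where "rot v = (\<chi> i. if i = 1 then - (v $ 2) else v $ 1)"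

lemma inner2: "(u::pt) \<bullet> v = u $ 1 * v $ 1 + u $ 2 * v $ 2"
  by (simp add: inner_vec_def sum_2)

lemma rot_comp: "rot v $ 1 = - (v $ 2)" "rot v $ 2 = v $ 1"
  by (simp_all add: rot_def)

lemma ID: "(d \<bullet> d) * (v \<bullet> w) = (v \<bullet> d) * (w \<bullet> d) + (v \<bullet> rot d) * (w \<bullet> rot d)"
  by (simp add: inner2 rot_comp algebra_simps power2_eq_square)

lemma vec_eq_coords:
  assumes "d \<noteq> 0" "u \<bullet> d = v \<bullet> d" "u \<bullet> rot d = v \<bullet> rot d"
  shows "u = v"
proof -
  have "(d \<bullet> d) * ((u - v) \<bullet> (u - v)) = 0"
    using ID[of d "u - v" "u - v"] assms by (simp add: inner_diff_left)
  then have "(u - v) \<bullet> (u - v) = 0" using assms(1) by simp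
  then show ?thesis by simp
qed

lemma sort_pts:
  fixes P :: "pt set"
  assumes fin: "finite P" and inj: "inj_on (\<lambda>q. q \<bullet> d) P"
  shows "\<exists>p. p ` {..<card P} = P \<and> (\<forall>i j. i < j \<longrightarrow> j < card P \<longrightarrow> p i \<bullet> d < p j \<bullet> d)"
proof -
  define xs where "xs = sorted_list_of_set ((\<lambda>q. q \<bullet> d) ` P)"
  have ci: "card ((\<lambda>q. q \<bullet> d) ` P) = card P" using inj by (rule card_image)
  have len: "length xs = card P" unfolding xs_def length_sorted_list_of_set ci ..
  have set: "set xs = (\<lambda>q. q \<bullet> d) ` P" unfolding xs_def using fin by simp
  have sw: "sorted_wrt (<) xs" unfolding xs_def by (rule strict_sorted_list_of_set)
  define p where "p i = inv_into P (\<lambda>q. q \<bullet> d) (xs ! i)" for i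
  have pP: "p i \<in> P" and fp: "p i \<bullet> d = xs ! i" if "i < card P" for i
  proof -
    have "xs ! i \<in> set xs" using that len by simp
    then have "xs ! i \<in> (\<lambda>q. q \<bullet> d) ` P" using set by simp
    then show "p i \<in> P" "p i \<bullet> d = xs ! i" unfolding p_def
      by (simp_all add: inv_into_into f_inv_into_f[where f = "\<lambda>q. q \<bullet> d"])
  qed
  show ?thesis
  proof (intro exI conjI allI impI)
    show "p ` {..<card P} = P"
    proof
      show "p ` {..<card P} \<subseteq> P" using pP by auto
      show "P \<subseteq> p ` {..<card P}"
      proof
        fix q assume q: "q \<in> P"
        then have "q \<bullet> d \<in> set xs" using set by simp
        then obtain i where i: "i < length xs" "xs ! i = q \<bullet> d" by (auto simp: in_set_conv_nth)
        then have "p i \<bullet> d = q \<bullet> d" using fp len by simp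
        moreover have "p i \<in> P" using pP i len by simp
        ultimately have "p i = q" using inj q by (simp add: inj_on_def)
        then show "q \<in> p ` {..<card P}" using i len by auto
      qed
    qed
    fix i j assume ij: "i < j" "j < card P"
    then have "xs ! i < xs ! j" using sw len by (simp add: sorted_wrt_nth_less)
    then show "p i \<bullet> d < p j \<bullet> d" using fp ij by simp
  qed
qed

lemma support:
  fixes P :: "pt set"
  assumes fin: "finite P" and ab: "a \<in> P" "b \<in> P" and fr: "closed_segment a b \<subseteq> frontier (convex hull P)"
  shows "\<exists>\<nu>. \<nu> \<noteq> 0 \<and> (\<forall>q\<in>P. \<nu> \<bullet> q \<le> \<nu> \<bullet> a) \<and> \<nu> \<bullet> b = \<nu> \<bullet> a"
proof -
  define C where "C = convex hull P"
  define m where "m = midpoint a b"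
  have cv: "convex C" unfolding C_def by simp
  have cl: "closed C" unfolding C_def using fin by (simp add: compact_imp_closed finite_imp_compact_convex_hull)
  have mF: "m \<in> frontier C" using fr midpoint_in_closed_segment unfolding m_def C_def by blast
  have mI: "m \<notin> interior C" using mF by (simp add: frontier_def)
  have PC: "P \<subseteq> C" unfolding C_def by (simp add: hull_subset)
  obtain \<nu> where nz: "\<nu> \<noteq> 0" and le: "\<forall>q\<in>C. \<nu> \<bullet> q \<le> \<nu> \<bullet> m"
  proof (cases "interior C = {}")
    case True
    then obtain \<nu> c where "\<nu> \<noteq> 0" "C \<subseteq> {x. \<nu> \<bullet> x = c}"
      using empty_interior_subset_hyperplane[OF cv] by metis
    moreover have "m \<in> C" using mF cl by (simp add: frontier_def closure_closed)
    ultimately have "\<forall>q\<in>C. \<nu> \<bullet> q \<le> \<nu> \<bullet> m"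
    proof (intro ballI)
      fix q assume "\<nu> \<noteq> 0" "C \<subseteq> {x. \<nu> \<bullet> x = c}" "m \<in> C" "q \<in> C"
      then have "\<nu> \<bullet> q = c" "\<nu> \<bullet> m = c" by blast+
      then show "\<nu> \<bullet> q \<le> \<nu> \<bullet> m" by simp
    qed
    then show ?thesis using that \<open>\<nu> \<noteq> 0\<close> by blast
  next
    case False
    obtain \<nu> c where "\<nu> \<noteq> 0" and h1: "\<forall>x\<in>interior C. \<nu> \<bullet> x \<le> c" and h2: "\<forall>x\<in>{m}. c \<le> \<nu> \<bullet> x"
      using separating_hyperplane_sets[of "interior C" "{m}"] False mI cv convex_interior by auto
    have "closure (interior C) \<subseteq> {x. \<nu> \<bullet> x \<le> c}"
      by (rule closure_minimal) (use h1 closed_halfspace_le in auto)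
    then have "C \<subseteq> {x. \<nu> \<bullet> x \<le> c}" using convex_closure_interior[OF cv False] cl by (simp add: closure_closed)
    then have "\<forall>q\<in>C. \<nu> \<bullet> q \<le> \<nu> \<bullet> m" using h2 by force
    then show ?thesis using that \<open>\<nu> \<noteq> 0\<close> by blast
  qed
  have ma: "\<nu> \<bullet> m = (\<nu> \<bullet> a + \<nu> \<bullet> b) / 2" unfolding m_def midpoint_def by (simp add: inner_add_right)
  have "\<nu> \<bullet> a \<le> \<nu> \<bullet> m" "\<nu> \<bullet> b \<le> \<nu> \<bullet> m" using le PC ab by auto
  then have "\<nu> \<bullet> b = \<nu> \<bullet> a" "\<nu> \<bullet> m = \<nu> \<bullet> a" using ma by simp_all
  then show ?thesis using nz le PC by auto
qed




lemma hull_contra: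
  fixes pi pj pk a b d e :: pt
  assumes o: "a \<bullet> d \<le> pi \<bullet> d" "pi \<bullet> d < pj \<bullet> d" "pj \<bullet> d < pk \<bullet> d" "pk \<bullet> d \<le> b \<bullet> d"
  and G: "\<And>v. v \<in> {pi, pj, pk} \<Longrightarrow> (b \<bullet> d - a \<bullet> d) * (v \<bullet> e - a \<bullet> e) - (b \<bullet> e - a \<bullet> e) * (v \<bullet> d - a \<bullet> d) \<le> 0"
  and eq: "\<And>u v. u \<bullet> d = v \<bullet> d \<Longrightarrow> u \<bullet> e = v \<bullet> e \<Longrightarrow> u = v"
  and D: "0 \<le> (pk \<bullet> d - pi \<bullet> d) * (pj \<bullet> e - pi \<bullet> e) - (pk \<bullet> e - pi \<bullet> e) * (pj \<bullet> d - pi \<bullet> d)"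
  shows "pj \<in> convex hull {pi, pk, a, b}"
proof -
  define H where "H = convex hull {pi, pk, a, b}"
  have cH: "convex H" unfolding H_def by simp
  have mem: "pi \<in> H" "pk \<in> H" "a \<in> H" "b \<in> H" unfolding H_def by (simp_all add: hull_inc)
  have comb: "(1 - u) *\<^sub>R v + u *\<^sub>R w \<in> H" if "v \<in> H" "w \<in> H" "0 \<le> u" "u \<le> 1" for u v w
    using cH that unfolding convex_alt by blast
  define xi where "xi = pi \<bullet> d"
  define xj where "xj = pj \<bullet> d"
  define xk where "xk = pk \<bullet> d"
  define xa where "xa = a \<bullet> d"
  define xb where "xb = b \<bullet> d"
  define yi where "yi = pi \<bullet> e"
  define yj where "yj = pj \<bullet> e"
  define yk where "yk = pk \<bullet> e"
  define ya where "ya = a \<bullet> e"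
  define yb where "yb = b \<bullet> e"
  have o': "xa \<le> xi" "xi < xj" "xj < xk" "xk \<le> xb" using o unfolding xi_def xj_def xk_def xa_def xb_def by simp_all
  define g where "g v = (xb - xa) * (v \<bullet> e - ya) - (yb - ya) * (v \<bullet> d - xa)" for v
  have Gi: "g pi \<le> 0" "g pj \<le> 0" "g pk \<le> 0" using G unfolding g_def xa_def xb_def ya_def yb_def by auto
  have g_comb: "g ((1 - u) *\<^sub>R v + u *\<^sub>R w) = (1 - u) * g v + u * g w" for u v w
    unfolding g_def by (simp add: inner_add_left algebra_simps)
  define l where "l = (xj - xi) / (xk - xi)"
  have l01: "0 \<le> l" "l \<le> 1" using o' unfolding l_def by (simp_all add: divide_le_eq_1)
  have lx: "l * (xk - xi) = xj - xi" using o' unfolding l_def by simp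
  define s where "s = (1 - l) *\<^sub>R pi + l *\<^sub>R pk"
  have sH: "s \<in> H" unfolding s_def using comb mem l01 by blast
  have sx: "s \<bullet> d = xj" unfolding s_def using lx
    by (simp add: inner_add_left xi_def xk_def algebra_simps)
  have sy: "s \<bullet> e = yi + l * (yk - yi)" unfolding s_def
    by (simp add: inner_add_left yi_def yk_def algebra_simps)
  define m where "m = (xj - xa) / (xb - xa)"
  have m01: "0 \<le> m" "m \<le> 1" using o' unfolding m_def by (simp_all add: divide_le_eq_1)
  have mx: "m * (xb - xa) = xj - xa" using o' unfolding m_def by simp
  define t where "t = (1 - m) *\<^sub>R a + m *\<^sub>R b"
  have tH: "t \<in> H" unfolding t_def using comb mem m01 by blast
  have tx: "t \<bullet> d = xj" unfolding t_def using mx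
    by (simp add: inner_add_left xa_def xb_def algebra_simps)
  have ty: "t \<bullet> e = ya + m * (yb - ya)" unfolding t_def
    by (simp add: inner_add_left ya_def yb_def algebra_simps)
  have gt: "g v = (xb - xa) * (v \<bullet> e - t \<bullet> e)" if "v \<bullet> d = xj" for v
  proof -
    have "(xb - xa) * (t \<bullet> e - ya) = (yb - ya) * (m * (xb - xa))"
      unfolding ty by (simp add: algebra_simps)
    also have "\<dots> = (yb - ya) * (xj - xa)" using mx by simp
    finally have "(xb - xa) * (t \<bullet> e - ya) = (yb - ya) * (xj - xa)" .
    then show ?thesis unfolding g_def using that by (simp add: algebra_simps)
  qed
  have pos: "0 < xb - xa" using o' by simp
  have gs: "g s \<le> 0" unfolding s_def g_comb using Gi l01
    by (simp add: mult_nonneg_nonpos add_nonpos_nonpos)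
  have st: "s \<bullet> e \<le> t \<bullet> e"
  proof -
    have "(xb - xa) * (s \<bullet> e - t \<bullet> e) \<le> 0" using gs gt[OF sx] by simp
    then show ?thesis using pos by (simp add: mult_le_0_iff)
  qed
  have jt: "yj \<le> t \<bullet> e"
  proof -
    have "(xb - xa) * (pj \<bullet> e - t \<bullet> e) \<le> 0" using Gi(2) gt[of pj] by (simp add: xj_def)
    then show ?thesis using pos by (simp add: mult_le_0_iff yj_def)
  qed
  have sj: "s \<bullet> e \<le> yj"
  proof -
    have "(xk - xi) * (yj - s \<bullet> e) = (xk - xi) * (yj - yi) - (yk - yi) * (l * (xk - xi))"
      unfolding sy by (simp add: algebra_simps)
    also have "\<dots> = (xk - xi) * (yj - yi) - (yk - yi) * (xj - xi)" using lx by simp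
    finally have "(xk - xi) * (yj - s \<bullet> e) = (xk - xi) * (yj - yi) - (yk - yi) * (xj - xi)" .
    then have "0 \<le> (xk - xi) * (yj - s \<bullet> e)" using D
      unfolding xi_def xj_def xk_def yi_def yj_def yk_def by simp
    moreover have "0 < xk - xi" using o' by simp
    ultimately show ?thesis by (simp add: zero_le_mult_iff)
  qed
  define th where "th = (if t \<bullet> e = s \<bullet> e then 0 else (yj - s \<bullet> e) / (t \<bullet> e - s \<bullet> e))"
  have th01: "0 \<le> th" "th \<le> 1" unfolding th_def using st jt sj by (auto simp: divide_le_eq_1)
  have thy: "s \<bullet> e + th * (t \<bullet> e - s \<bullet> e) = yj"
    unfolding th_def using st jt sj by auto
  define w where "w = (1 - th) *\<^sub>R s + th *\<^sub>R t"
  have wH: "w \<in> H" unfolding w_def using comb sH tH th01 by blast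
  have wx: "w \<bullet> d = pj \<bullet> d" unfolding w_def using sx tx by (simp add: inner_add_left xj_def algebra_simps)
  have wy: "w \<bullet> e = pj \<bullet> e" unfolding w_def using thy by (simp add: inner_add_left yj_def algebra_simps)
  have "w = pj" using eq[OF wx wy] .
  then show ?thesis using wH unfolding H_def by simp
qed




theorem lemma1:
  fixes P :: "(real^2) set"
  assumes "one_sided_convex P" and "card P \<ge> 2"
  shows "\<exists>E. geometric_graph P E \<and> planar_gg E \<and> increasing_chord P E \<and>
             card E = 2 * card P - 3"
proof -
  obtain d where gen: "generic_direction P d" and os: "one_sided_wrt P d" and cps: "convex_point_set P"
    using assms(1) unfolding one_sided_convex_def by blast
  have fin: "finite P" and hc: "\<And>q. q \<in> P \<Longrightarrow> q \<notin> convex hull (P - {q})"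
    using cps unfolding convex_point_set_def by auto
  have d0: "d \<noteq> 0" and dist: "\<And>u v. u \<in> P \<Longrightarrow> v \<in> P \<Longrightarrow> u \<noteq> v \<Longrightarrow> u \<bullet> d \<noteq> v \<bullet> d"
    using gen unfolding generic_direction_def by (auto simp: inner_diff_left)
  have injX: "inj_on (\<lambda>q. q \<bullet> d) P" using dist by (meson inj_onI)
  obtain a b where ab: "a \<in> P" "b \<in> P" and amin: "\<And>q. q \<in> P \<Longrightarrow> a \<bullet> d \<le> q \<bullet> d"
    and bmax: "\<And>q. q \<in> P \<Longrightarrow> q \<bullet> d \<le> b \<bullet> d" and fr: "closed_segment a b \<subseteq> frontier (convex hull P)"
    using os unfolding one_sided_wrt_def by blast
  define n where "n = card P"
  have n2: "2 \<le> n" using assms(2) n_def by simp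
  obtain p where pP: "p ` {..<n} = P" and xm: "\<And>i j. i < j \<Longrightarrow> j < n \<Longrightarrow> p i \<bullet> d < p j \<bullet> d"
    using sort_pts[OF fin injX] unfolding n_def by blast
  obtain \<nu> where nz: "\<nu> \<noteq> 0" and nle: "\<forall>q\<in>P. \<nu> \<bullet> q \<le> \<nu> \<bullet> a" and nab: "\<nu> \<bullet> b = \<nu> \<bullet> a"
    using support[OF fin ab fr] by blast
  have xab: "a \<bullet> d < b \<bullet> d"
  proof -
    have "P - {a} \<noteq> {}"
    proof
      assume "P - {a} = {}"
      then have "P \<subseteq> {a}" by blast
      then have "card P \<le> 1" using card_mono[of "{a}" P] by simp
      then show False using assms(2) by simp
    qed
    then obtain q where q: "q \<in> P" "q \<noteq> a" by blast
    then have "q \<bullet> d \<noteq> a \<bullet> d" using dist ab by blast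
    then show ?thesis using amin[OF q(1)] bmax[OF q(1)] by simp
  qed
  define \<alpha> where "\<alpha> = \<nu> \<bullet> d"
  define \<beta> where "\<beta> = \<nu> \<bullet> rot d"
  have dd: "0 < d \<bullet> d" using d0 by simp
  have rel: "0 = \<alpha> * (b \<bullet> d - a \<bullet> d) + \<beta> * (b \<bullet> rot d - a \<bullet> rot d)"
    using ID[of d \<nu> "b - a"] nab unfolding \<alpha>_def \<beta>_def by (simp add: inner_diff_left inner_diff_right)
  have b0: "\<beta> \<noteq> 0"
  proof
    assume "\<beta> = 0"
    then have "\<alpha> = 0" using rel xab by simp
    then have "(d \<bullet> d) * (\<nu> \<bullet> \<nu>) = 0" using ID[of d \<nu> \<nu>] \<open>\<beta> = 0\<close> unfolding \<alpha>_def \<beta>_def by simp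
    then show False using dd nz by simp
  qed
  define e where "e = \<beta> *\<^sub>R rot d"
  have eqv: "u = v" if "u \<bullet> d = v \<bullet> d" "u \<bullet> e = v \<bullet> e" for u v
  proof -
    have "u \<bullet> rot d = v \<bullet> rot d" using that(2) b0 unfolding e_def by simp
    then show ?thesis using vec_eq_coords[OF d0 that(1)] by simp
  qed
  have quad: "0 \<le> w \<bullet> w'" if "0 \<le> (w \<bullet> d) * (w' \<bullet> d)" "0 \<le> (w \<bullet> e) * (w' \<bullet> e)" for w w'
  proof -
    have "(w \<bullet> e) * (w' \<bullet> e) = (\<beta> * \<beta>) * ((w \<bullet> rot d) * (w' \<bullet> rot d))" unfolding e_def by simp
    moreover have "0 < \<beta> * \<beta>" using b0 by (metis not_real_square_gt_zero)
    ultimately have "0 \<le> (w \<bullet> rot d) * (w' \<bullet> rot d)" using that(2) by (simp add: zero_le_mult_iff)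
    then have "0 \<le> (d \<bullet> d) * (w \<bullet> w')" using ID[of d w w'] that(1) by simp
    then show ?thesis using dd by (simp add: zero_le_mult_iff)
  qed
  have G: "(b \<bullet> d - a \<bullet> d) * (v \<bullet> e - a \<bullet> e) - (b \<bullet> e - a \<bullet> e) * (v \<bullet> d - a \<bullet> d) \<le> 0" if "v \<in> P" for v
  proof -
    define A where "A = (d \<bullet> d) * (\<nu> \<bullet> (v - a))"
    have A: "A = \<alpha> * (v \<bullet> d - a \<bullet> d) + \<beta> * (v \<bullet> rot d - a \<bullet> rot d)"
      using ID[of d \<nu> "v - a"] unfolding A_def \<alpha>_def \<beta>_def by (simp add: inner_diff_left inner_diff_right)
    have Ale: "A \<le> 0" unfolding A_def using nle that dd by (simp add: inner_diff_right mult_nonneg_nonpos)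
    have "(b \<bullet> d - a \<bullet> d) * (v \<bullet> e - a \<bullet> e) - (b \<bullet> e - a \<bullet> e) * (v \<bullet> d - a \<bullet> d)
        = (b \<bullet> d - a \<bullet> d) * A - (v \<bullet> d - a \<bullet> d) * (\<alpha> * (b \<bullet> d - a \<bullet> d) + \<beta> * (b \<bullet> rot d - a \<bullet> rot d))"
      unfolding A e_def by (simp add: algebra_simps)
    also have "\<dots> = (b \<bullet> d - a \<bullet> d) * A" using rel by simp
    also have "\<dots> \<le> 0" using xab Ale by (simp add: mult_nonneg_nonpos)
    finally show ?thesis .
  qed
  have pin: "p i \<in> P" if "i < n" for i using pP that by auto
  have cvx: "(p k \<bullet> d - p i \<bullet> d) * (p j \<bullet> e - p i \<bullet> e) - (p k \<bullet> e - p i \<bullet> e) * (p j \<bullet> d - p i \<bullet> d) < 0"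
    if ijk: "i < j" "j < k" "k < n" for i j k
  proof (rule ccontr)
    assume "\<not> ?thesis"
    then have D: "0 \<le> (p k \<bullet> d - p i \<bullet> d) * (p j \<bullet> e - p i \<bullet> e) - (p k \<bullet> e - p i \<bullet> e) * (p j \<bullet> d - p i \<bullet> d)" by simp
    have Pi: "p i \<in> P" "p j \<in> P" "p k \<in> P" using pin ijk by auto
    have o: "a \<bullet> d \<le> p i \<bullet> d" "p i \<bullet> d < p j \<bullet> d" "p j \<bullet> d < p k \<bullet> d" "p k \<bullet> d \<le> b \<bullet> d"
      using amin[OF Pi(1)] bmax[OF Pi(3)] xm ijk by auto
    have "p j \<in> convex hull {p i, p k, a, b}"
      by (rule hull_contra[OF o _ eqv D]) (use G Pi in auto)
    moreover have "{p i, p k, a, b} \<subseteq> P - {p j}" using o Pi ab by auto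
    ultimately have "p j \<in> convex hull (P - {p j})" using hull_mono by blast
    then show False using hc Pi(2) by blast
  qed
  interpret chain p n d e
    by unfold_locales (use n2 xm quad cvx in auto)
  show ?thesis using chain_main pP n_def by metis
qed



end
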